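(* Let $G$ and $H$ be two nontrivial connected graphs. Then $$\max\{hn_{cc}(G),hn_{cc}(H),3\}\leq hn_{cc}(G\Box H)\leq hn_{cc}(G)+hn_{cc}(H)-1.$$
   Context: All graphs are finite, simple and undirected. For a graph $G$ and $S\subseteq V(G)$, the cycle interval $\langle S\rangle$ consists of the vertices of $S$ together with every vertex $w\in V(G)\setminus S$ such that $G[S\cup\{w\}]$ contains a cycle through $w$; $S$ is cycle convex if $\langle S\rangle=S$; the cycle convex hull $\langle S\rangle_C$ is the smallest cycle convex set containing $S$; a hull set is a set $S$ with $\langle S\rangle_C=V(G)$, and $hn_{cc}(G)$ is the minimum cardinality of a hull set. The Cartesian product $G\Box H$ has vertex set $V(G)\times V(H)$, with $(g_1,h_1)\sim(g_2,h_2)$ iff ($g_1\sim g_2$ and $h_1=h_2$) or ($g_1=g_2$ and $h_1\sim h_2$). A graph is nontrivial if it has at least two vertices. *)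

theory Defs
  imports Main
begin

definition graph :: "'a set \<Rightarrow> 'a set set \<Rightarrow> bool" where
  "graph V E \<longleftrightarrow> finite V \<and> (\<forall>e\<in>E. \<exists>u v. e = {u, v} \<and> u \<in> V \<and> v \<in> V \<and> u \<noteq> v)"

definition adj :: "'a set set \<Rightarrow> 'a \<Rightarrow> 'a \<Rightarrow> bool" where
  "adj E u v \<longleftrightarrow> {u, v} \<in> E"

definition nontrivial :: "'a set \<Rightarrow> bool" where
  "nontrivial V \<longleftrightarrow> card V \<ge> 2"

definition connected_graph :: "'a set \<Rightarrow> 'a set set \<Rightarrow> bool" where
  "connected_graph V E \<longleftrightarrow>
     (\<forall>u\<in>V. \<forall>v\<in>V. (u, v) \<in> {(x, y). adj E x y}\<^sup>*)"

text \<open>A cycle whose vertices all lie in T (hence a cycle of the induced subgraph G[T]):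
  a list of at least 3 distinct vertices, consecutive ones (cyclically) adjacent.\<close>
definition cycle_in :: "'a set set \<Rightarrow> 'a set \<Rightarrow> 'a list \<Rightarrow> bool" where
  "cycle_in E T xs \<longleftrightarrow> length xs \<ge> 3 \<and> distinct xs \<and> set xs \<subseteq> T \<and>
     (\<forall>i<length xs. adj E (xs ! i) (xs ! ((i + 1) mod length xs)))"

definition cycle_interval :: "'a set \<Rightarrow> 'a set set \<Rightarrow> 'a set \<Rightarrow> 'a set" where
  "cycle_interval V E S =
     S \<union> {w \<in> V - S. \<exists>xs. cycle_in E (S \<union> {w}) xs \<and> w \<in> set xs}"

definition cycle_convex :: "'a set \<Rightarrow> 'a set set \<Rightarrow> 'a set \<Rightarrow> bool" where
  "cycle_convex V E S \<longleftrightarrow> S \<subseteq> V \<and> cycle_interval V E S = S"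

definition cc_hull :: "'a set \<Rightarrow> 'a set set \<Rightarrow> 'a set \<Rightarrow> 'a set" where
  "cc_hull V E S = \<Inter>{C. cycle_convex V E C \<and> S \<subseteq> C}"

definition cc_hull_set :: "'a set \<Rightarrow> 'a set set \<Rightarrow> 'a set \<Rightarrow> bool" where
  "cc_hull_set V E S \<longleftrightarrow> S \<subseteq> V \<and> cc_hull V E S = V"

definition hn_cc :: "'a set \<Rightarrow> 'a set set \<Rightarrow> nat" where
  "hn_cc V E = (LEAST k. \<exists>S. cc_hull_set V E S \<and> card S = k)"

definition box_vertices :: "'a set \<Rightarrow> 'b set \<Rightarrow> ('a \<times> 'b) set" where
  "box_vertices V W = V \<times> W"

definition box_edges :: "'a set \<Rightarrow> 'a set set \<Rightarrow> 'b set \<Rightarrow> 'b set set \<Rightarrow> ('a \<times> 'b) set set" where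
  "box_edges V E W F =
     {{(g1, h), (g2, h)} | g1 g2 h. {g1, g2} \<in> E \<and> h \<in> W} \<union>
     {{(g, h1), (g, h2)} | g h1 h2. g \<in> V \<and> {h1, h2} \<in> F}"

end

theory Submission
  imports Defs
begin

fun walk :: "'a set set \<Rightarrow> 'a list \<Rightarrow> bool" where
  "walk E [] = False"
| "walk E [x] = True"
| "walk E (x # y # xs) = (adj E x y \<and> walk E (y # xs))"

lemma adj_sym: "adj E x y \<Longrightarrow> adj E y x"
  by (simp add: adj_def insert_commute)

lemma walk_append: "walk E (xs @ y # ys) \<longleftrightarrow> walk E (xs @ [y]) \<and> walk E (y # ys)"
proof (induction xs)
  case Nil then show ?case by simp
next
  case (Cons a xs) then show ?case by (cases xs) auto
qed

lemma walk_Cons: "ys \<noteq> [] \<Longrightarrow> walk E (x # ys) \<longleftrightarrow> adj E x (hd ys) \<and> walk E ys"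
  by (cases ys) auto

lemma walk_nth: "walk E xs \<longleftrightarrow> xs \<noteq> [] \<and> (\<forall>i. Suc i < length xs \<longrightarrow> adj E (xs!i) (xs!Suc i))"
proof (induction xs rule: walk.induct)
  case (3 E x y xs)
  show ?case
  proof
    assume "walk E (x # y # xs)"
    then show "x # y # xs \<noteq> [] \<and> (\<forall>i. Suc i < length (x # y # xs) \<longrightarrow> adj E ((x # y # xs) ! i) ((x # y # xs) ! Suc i))"
      using 3 by (auto simp: nth_Cons split: nat.splits)
  next
    assume H: "x # y # xs \<noteq> [] \<and> (\<forall>i. Suc i < length (x # y # xs) \<longrightarrow> adj E ((x # y # xs) ! i) ((x # y # xs) ! Suc i))"
    have "adj E x y" using H by (metis Suc_less_eq length_Cons nth_Cons_0 nth_Cons_Suc zero_less_Suc)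
    moreover have "\<forall>i. Suc i < length (y # xs) \<longrightarrow> adj E ((y # xs) ! i) ((y # xs) ! Suc i)"
      using H by (metis Suc_less_eq length_Cons nth_Cons_Suc)
    ultimately show "walk E (x # y # xs)" using 3 by simp
  qed
qed auto

lemma cycle_Cons: "cycle_in E T (x # ys) \<longleftrightarrow> 2 \<le> length ys \<and> distinct (x#ys) \<and> set (x#ys) \<subseteq> T
   \<and> walk E (x#ys) \<and> adj E (last ys) x"
proof -
  let ?l = "x # ys"
  let ?n = "length ?l"
  have A: "(\<forall>i<?n. adj E (?l ! i) (?l ! ((i + 1) mod ?n))) \<longleftrightarrow>
     (\<forall>i. Suc i < ?n \<longrightarrow> adj E (?l!i) (?l!Suc i)) \<and> (ys \<noteq> [] \<longrightarrow> adj E (last ys) x)" if "ys \<noteq> []"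
  proof -
    have L: "?l ! (length ys) = last ys" using that by (simp add: last_conv_nth nth_Cons split: nat.splits)
    show ?thesis
    proof
      assume H: "\<forall>i<?n. adj E (?l ! i) (?l ! ((i + 1) mod ?n))"
      have "\<forall>i. Suc i < ?n \<longrightarrow> adj E (?l!i) (?l!Suc i)"
      proof (intro allI impI)
        fix i assume "Suc i < ?n"
        then show "adj E (?l!i) (?l!Suc i)" using H[rule_format, of i] by simp
      qed
      moreover have "adj E (last ys) x" using H[rule_format, of "length ys"] L by simp
      ultimately show "(\<forall>i. Suc i < ?n \<longrightarrow> adj E (?l!i) (?l!Suc i)) \<and> (ys \<noteq> [] \<longrightarrow> adj E (last ys) x)" by simp
    next
      assume H: "(\<forall>i. Suc i < ?n \<longrightarrow> adj E (?l!i) (?l!Suc i)) \<and> (ys \<noteq> [] \<longrightarrow> adj E (last ys) x)"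
      show "\<forall>i<?n. adj E (?l ! i) (?l ! ((i + 1) mod ?n))"
      proof (intro allI impI)
        fix i assume i: "i < ?n"
        show "adj E (?l ! i) (?l ! ((i + 1) mod ?n))"
        proof (cases "Suc i < ?n")
          case True then show ?thesis using H by simp
        next
          case False
          then have "i = length ys" using i by simp
          then show ?thesis using H L that by simp
        qed
      qed
    qed
  qed
  show ?thesis
  proof (cases "ys = []")
    case True then show ?thesis by (simp add: cycle_in_def)
  next
    case False
    then show ?thesis unfolding cycle_in_def using A[OF False] by (auto simp: walk_nth)
  qed
qed

lemma walk_path: "walk E xs \<Longrightarrow> \<exists>ys. walk E ys \<and> distinct ys \<and> hd ys = hd xs \<and> last ys = last xs \<and> set ys \<subseteq> set xs"
proof (induction "length xs" arbitrary: xs rule: less_induct)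
  case less
  show ?case
  proof (cases "distinct xs")
    case True then show ?thesis using less.prems by blast
  next
    case False
    then obtain a b c x where xs: "xs = a @ [x] @ b @ [x] @ c" using not_distinct_decomp by blast
    let ?zs = "a @ x # c"
    have w1: "walk E (a @ [x])" and w2: "walk E (x # b @ x # c)"
      using less.prems xs walk_append[of E a x "b @ x # c"] by auto
    have "walk E (x # c)" using w2 walk_append[of E "x # b" x c] by simp
    then have wz: "walk E ?zs" using w1 walk_append[of E a x c] by simp
    have "hd ?zs = hd xs" "last ?zs = last xs" "set ?zs \<subseteq> set xs" using xs by (cases a; auto)+
    moreover have "length ?zs < length xs" using xs by simp
    ultimately show ?thesis using less.hyps[OF _ wz] by (metis order_trans)
  qed
qed

lemma proj_walk:
  assumes "walk E' xs" "\<And>x y. adj E' x y \<Longrightarrow> \<pi> x = \<pi> y \<or> adj E (\<pi> x) (\<pi> y)"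
  shows "\<exists>ys. walk E ys \<and> hd ys = \<pi> (hd xs) \<and> last ys = \<pi> (last xs) \<and> set ys \<subseteq> \<pi> ` set xs"
  using assms(1)
proof (induction xs)
  case Nil then show ?case by simp
next
  case (Cons x xs)
  show ?case
  proof (cases xs)
    case Nil then show ?thesis by (intro exI[of _ "[\<pi> x]"]) simp
  next
    case (Cons y xs')
    then have axy: "adj E' x y" and wxs: "walk E' xs" using Cons.prems by auto
    then obtain ys where ys: "walk E ys" "hd ys = \<pi> y" "last ys = \<pi> (last xs)" "set ys \<subseteq> \<pi> ` set xs"
      using Cons.IH Cons by auto
    have ne: "ys \<noteq> []" using ys(1) by (cases ys) auto
    show ?thesis
    proof (cases "\<pi> x = \<pi> y")
      case True then show ?thesis using ys Cons by (intro exI[of _ ys]) auto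
    next
      case False
      then have "adj E (\<pi> x) (\<pi> y)" using assms(2) axy by auto
      then show ?thesis using ys ne Cons by (intro exI[of _ "\<pi> x # ys"]) (auto simp: walk_Cons)
    qed
  qed
qed


lemma cycle_rotate:
  assumes "cycle_in E T xs" "p \<in> set xs"
  shows "\<exists>ys. cycle_in E T (p # ys) \<and> set (p # ys) = set xs"
proof -
  obtain k where k: "k < length xs" "xs ! k = p" using assms(2) by (metis in_set_conv_nth)
  let ?n = "length xs"
  define rs where "rs = rotate k xs"
  have len: "length rs = ?n" by (simp add: rs_def)
  have nth: "rs ! i = xs ! ((k + i) mod ?n)" if "i < ?n" for i
    using that by (simp add: rs_def nth_rotate)
  have npos: "0 < ?n" using k(1) by linarith
  have r0: "rs ! 0 = p" using nth[of 0] k npos by simp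
  have ne: "rs \<noteq> []" using len npos by auto
  have rs_eq: "rs = p # tl rs" using ne r0 by (cases rs) auto
  have C: "cycle_in E T rs"
    unfolding cycle_in_def
  proof (intro conjI allI impI)
    show "3 \<le> length rs" using assms(1) len by (simp add: cycle_in_def)
    show "distinct rs" using assms(1) by (simp add: rs_def cycle_in_def)
    show "set rs \<subseteq> T" using assms(1) by (simp add: rs_def cycle_in_def)
    fix i assume i: "i < length rs"
    have j: "(k + i) mod ?n < ?n" using npos by simp
    have e: "(k + (i + 1) mod ?n) mod ?n = ((k + i) mod ?n + 1) mod ?n"
      by (metis mod_add_right_eq mod_add_left_eq add.assoc)
    have "adj E (xs ! ((k + i) mod ?n)) (xs ! (((k + i) mod ?n + 1) mod ?n))"
      using assms(1) j by (simp add: cycle_in_def)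
    then show "adj E (rs ! i) (rs ! ((i + 1) mod length rs))"
      using nth i len npos e by simp
  qed
  have "set rs = set xs" by (simp add: rs_def)
  then show ?thesis using C rs_eq by (metis)
qed

lemma proj_cycle:
  assumes A1: "\<And>x y. adj E' x y \<Longrightarrow> \<pi> x = \<pi> y \<or> adj E (\<pi> x) (\<pi> y)"
  and A2: "\<And>x y. adj E' x y \<Longrightarrow> \<pi> x \<noteq> \<pi> y \<Longrightarrow> \<sigma> x = \<sigma> y"
  and A3: "\<And>x y. \<pi> x = \<pi> y \<Longrightarrow> \<sigma> x = \<sigma> y \<Longrightarrow> x = y"
  and cyc: "cycle_in E' T (p # ys)"
  and inC: "\<And>y. y \<in> set ys \<Longrightarrow> \<pi> y \<in> C"
  and nC: "\<pi> p \<notin> C"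
  shows "\<exists>zs. cycle_in E (C \<union> {\<pi> p}) (\<pi> p # zs)"
proof -
  from cyc have len: "2 \<le> length ys" and dist: "distinct (p#ys)" and wk: "walk E' (p#ys)"
    and lastadj: "adj E' (last ys) p" by (simp_all add: cycle_Cons)
  have ne: "ys \<noteq> []" using len by auto
  have hdadj: "adj E' p (hd ys)" using wk ne by (simp add: walk_Cons)
  have wys: "walk E' ys" using wk ne by (simp add: walk_Cons)
  have "hd ys \<in> set ys" "last ys \<in> set ys" using ne by auto
  hence "\<pi> (hd ys) \<in> C" "\<pi> (last ys) \<in> C" using inC by auto
  hence d1: "\<pi> (hd ys) \<noteq> \<pi> p" "\<pi> (last ys) \<noteq> \<pi> p" using nC by auto
  have a1: "adj E (\<pi> p) (\<pi> (hd ys))" using A1[OF hdadj] d1 by auto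
  have a2: "adj E (\<pi> (last ys)) (\<pi> p)" using A1[OF lastadj] d1 by auto
  have s1: "\<sigma> (hd ys) = \<sigma> p" using A2[OF hdadj] d1 by auto
  have s2: "\<sigma> (last ys) = \<sigma> p" using A2[OF lastadj] d1 by auto
  have "hd ys \<noteq> last ys"
  proof -
    have "hd ys = ys ! 0" using ne by (simp add: hd_conv_nth)
    moreover have "last ys = ys ! (length ys - 1)" using ne by (simp add: last_conv_nth)
    moreover have "distinct ys" using dist by simp
    moreover have "0 < length ys" "length ys - 1 < length ys" "0 \<noteq> length ys - 1" using len by auto
    ultimately show ?thesis using nth_eq_iff_index_eq by metis
  qed
  hence dpi: "\<pi> (hd ys) \<noteq> \<pi> (last ys)" using A3 s1 s2 by metis
  obtain ws where ws: "walk E ws" "hd ws = \<pi> (hd ys)" "last ws = \<pi> (last ys)" "set ws \<subseteq> \<pi> ` set ys"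
    using proj_walk[where \<pi>=\<pi> and E=E, OF wys A1] by blast
  obtain zs where zs: "walk E zs" "distinct zs" "hd zs = \<pi> (hd ys)" "last zs = \<pi> (last ys)" "set zs \<subseteq> set ws"
    using walk_path[OF ws(1)] ws by auto
  have setzs: "set zs \<subseteq> C" using zs ws inC by auto
  have nz: "\<pi> p \<notin> set zs" using setzs nC by auto
  have zne: "zs \<noteq> []" using zs(1) by (cases zs) auto
  have "length zs \<noteq> 1"
  proof
    assume "length zs = 1"
    then obtain z where "zs = [z]" by (cases zs) auto
    then show False using zs dpi by simp
  qed
  hence "2 \<le> length zs" using zne by (cases zs) (auto simp: Suc_le_eq)
  moreover have "walk E (\<pi> p # zs)" using zs a1 zne by (simp add: walk_Cons)
  moreover have "adj E (last zs) (\<pi> p)" using a2 zs by simp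
  ultimately have "cycle_in E (C \<union> {\<pi> p}) (\<pi> p # zs)"
    using zs(2) nz setzs by (auto simp: cycle_Cons)
  then show ?thesis by blast
qed

lemma box_adj: "adj (box_edges V E W F) (g1,h1) (g2,h2) \<longleftrightarrow>
   (h1 = h2 \<and> h1 \<in> W \<and> adj E g1 g2) \<or> (g1 = g2 \<and> g1 \<in> V \<and> adj F h1 h2)"
proof
  assume "adj (box_edges V E W F) (g1,h1) (g2,h2)"
  then show "(h1 = h2 \<and> h1 \<in> W \<and> adj E g1 g2) \<or> (g1 = g2 \<and> g1 \<in> V \<and> adj F h1 h2)"
    unfolding adj_def box_edges_def by (auto simp: doubleton_eq_iff insert_commute)
next
  assume "(h1 = h2 \<and> h1 \<in> W \<and> adj E g1 g2) \<or> (g1 = g2 \<and> g1 \<in> V \<and> adj F h1 h2)"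
  then show "adj (box_edges V E W F) (g1,h1) (g2,h2)"
    unfolding adj_def box_edges_def by blast
qed

lemma graph_adj: "graph V E \<Longrightarrow> adj E x y \<Longrightarrow> x \<in> V \<and> y \<in> V \<and> x \<noteq> y"
  unfolding graph_def adj_def by (auto simp: doubleton_eq_iff)

lemma hull_sub: "S \<subseteq> cc_hull V E S"
  unfolding cc_hull_def by blast

lemma hull_least: "cycle_convex V E C \<Longrightarrow> S \<subseteq> C \<Longrightarrow> cc_hull V E S \<subseteq> C"
  unfolding cc_hull_def by blast

lemma V_convex: "cycle_convex V E V"
  unfolding cycle_convex_def cycle_interval_def by auto

lemma V_hull_set: "cc_hull_set V E V"
  unfolding cc_hull_set_def using hull_sub[of V V E] hull_least[OF V_convex, of V] by auto

lemma hn_ex: "\<exists>S. cc_hull_set V E S \<and> card S = hn_cc V E"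
  unfolding hn_cc_def by (rule LeastI_ex) (use V_hull_set in blast)

lemma hn_le: "cc_hull_set V E S \<Longrightarrow> hn_cc V E \<le> card S"
  unfolding hn_cc_def by (rule Least_le) blast

lemma interval_mem: "cycle_convex V E C \<Longrightarrow> w \<in> V \<Longrightarrow> cycle_in E (C \<union> {w}) xs \<Longrightarrow> w \<in> set xs \<Longrightarrow> w \<in> C"
  unfolding cycle_convex_def cycle_interval_def by blast

lemma cycle_mono: "cycle_in E T xs \<Longrightarrow> T \<subseteq> T' \<Longrightarrow> cycle_in E T' xs"
  unfolding cycle_in_def by blast

lemma cycle_map:
  assumes "cycle_in E T xs" "inj f" "\<And>x y. x \<in> T \<Longrightarrow> y \<in> T \<Longrightarrow> adj E x y \<Longrightarrow> adj E' (f x) (f y)"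
  shows "cycle_in E' (f ` T) (map f xs)"
  unfolding cycle_in_def
proof (intro conjI allI impI)
  show "3 \<le> length (map f xs)" "set (map f xs) \<subseteq> f ` T" using assms(1) by (auto simp: cycle_in_def)
  show "distinct (map f xs)" using assms(1,2) by (simp add: cycle_in_def distinct_map inj_on_def)
  fix i assume i: "i < length (map f xs)"
  have n: "0 < length xs" using i by (metis length_map gr_zeroI less_nat_zero_code)
  have "xs ! i \<in> T" "xs ! ((i+1) mod length xs) \<in> T" using assms(1) i n by (auto simp: cycle_in_def)
  moreover have "adj E (xs ! i) (xs ! ((i+1) mod length xs))" using assms(1) i by (simp add: cycle_in_def)
  ultimately show "adj E' (map f xs ! i) (map f xs ! ((i + 1) mod length (map f xs)))"
    using assms(3) i n by simp
qed

lemma cycle_card: "cycle_in E T xs \<Longrightarrow> finite T \<Longrightarrow> 3 \<le> card T"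
  unfolding cycle_in_def by (metis card_mono distinct_card order_trans)

lemma small_convex: "S \<subseteq> V \<Longrightarrow> finite S \<Longrightarrow> card S \<le> 1 \<Longrightarrow> cycle_convex V E S"
  unfolding cycle_convex_def cycle_interval_def
proof (intro conjI, simp, auto)
  fix w xs assume "finite S" "card S \<le> Suc 0" "cycle_in E (insert w S) xs"
  moreover have "card (insert w S) \<le> Suc (card S)" by (simp add: card_insert_le_m1 card_insert_if)
  ultimately show False using cycle_card[of E "insert w S" xs] by simp
qed


lemma prod_convex_G:
  assumes C: "cycle_convex V E C"
  shows "cycle_convex (V \<times> W) (box_edges V E W F) (C \<times> W)"
proof -
  have CV: "C \<subseteq> V" using C by (simp add: cycle_convex_def)
  have "q \<in> C \<times> W" if q: "q \<in> V \<times> W - C \<times> W" and xs: "cycle_in (box_edges V E W F) (C \<times> W \<union> {q}) xs"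
    and qx: "q \<in> set xs" for q xs
  proof (rule ccontr)
    obtain ys where ys: "cycle_in (box_edges V E W F) (C \<times> W \<union> {q}) (q # ys)"
      using cycle_rotate[OF xs qx] by blast
    have inCW: "y \<in> C \<times> W" if "y \<in> set ys" for y
      using ys that by (auto simp: cycle_Cons)
    have inC: "fst y \<in> C" if "y \<in> set ys" for y using inCW[OF that] by auto
    have nC: "fst q \<notin> C" using q by auto
    obtain zs where zs: "cycle_in E (C \<union> {fst q}) (fst q # zs)"
      using proj_cycle[where \<pi>=fst and \<sigma>=snd and E=E, OF _ _ _ ys inC nC]
      by (auto simp: box_adj split: prod.splits) (auto simp: prod_eq_iff)
    have "fst q \<in> V" using q by auto
    then have "fst q \<in> C" using interval_mem[OF C _ zs] by simp
    then show False using nC by simp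
  qed
  then show ?thesis using CV unfolding cycle_convex_def cycle_interval_def by auto
qed

lemma prod_convex_H:
  assumes C: "cycle_convex W F C"
  shows "cycle_convex (V \<times> W) (box_edges V E W F) (V \<times> C)"
proof -
  have CV: "C \<subseteq> W" using C by (simp add: cycle_convex_def)
  have "q \<in> V \<times> C" if q: "q \<in> V \<times> W - V \<times> C" and xs: "cycle_in (box_edges V E W F) (V \<times> C \<union> {q}) xs"
    and qx: "q \<in> set xs" for q xs
  proof (rule ccontr)
    obtain ys where ys: "cycle_in (box_edges V E W F) (V \<times> C \<union> {q}) (q # ys)"
      using cycle_rotate[OF xs qx] by blast
    have inCW: "y \<in> V \<times> C" if "y \<in> set ys" for y
      using ys that by (auto simp: cycle_Cons)
    have inC: "snd y \<in> C" if "y \<in> set ys" for y using inCW[OF that] by auto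
    have nC: "snd q \<notin> C" using q by auto
    obtain zs where zs: "cycle_in F (C \<union> {snd q}) (snd q # zs)"
      using proj_cycle[where \<pi>=snd and \<sigma>=fst and E=F, OF _ _ _ ys inC nC]
      by (auto simp: box_adj split: prod.splits) (auto simp: prod_eq_iff)
    have "snd q \<in> W" using q by auto
    then have "snd q \<in> C" using interval_mem[OF C _ zs] by simp
    then show False using nC by simp
  qed
  then show ?thesis using CV unfolding cycle_convex_def cycle_interval_def by auto
qed

lemma layer_G:
  assumes C: "cycle_convex (V \<times> W) (box_edges V E W F) C" and h0: "h0 \<in> W"
    and SG: "cc_hull_set V E SG" and sub: "SG \<times> {h0} \<subseteq> C"
  shows "V \<times> {h0} \<subseteq> C"
proof -
  define D where "D = {g \<in> V. (g, h0) \<in> C}"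
  have "w \<in> D" if w: "w \<in> V - D" and xs: "cycle_in E (D \<union> {w}) xs" and wx: "w \<in> set xs" for w xs
  proof -
    let ?f = "\<lambda>g. (g, h0)"
    have inj: "inj ?f" by (auto simp: inj_on_def)
    have "cycle_in (box_edges V E W F) (?f ` (D \<union> {w})) (map ?f xs)"
      by (rule cycle_map[OF xs inj]) (simp add: box_adj h0)
    then have "cycle_in (box_edges V E W F) (C \<union> {(w,h0)}) (map ?f xs)"
      by (rule cycle_mono) (auto simp: D_def)
    then have "(w, h0) \<in> C" using interval_mem[OF C] w h0 wx by auto
    then show ?thesis using w by (simp add: D_def)
  qed
  then have "cycle_interval V E D \<subseteq> D" unfolding cycle_interval_def by blast
  then have "cycle_convex V E D" unfolding cycle_convex_def cycle_interval_def D_def by blast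
  moreover have "SG \<subseteq> D" using sub SG by (auto simp: D_def cc_hull_set_def)
  ultimately have "cc_hull V E SG \<subseteq> D" by (rule hull_least)
  then show ?thesis using SG by (auto simp: cc_hull_set_def D_def)
qed

lemma layer_H:
  assumes C: "cycle_convex (V \<times> W) (box_edges V E W F) C" and g0: "g0 \<in> V"
    and SH: "cc_hull_set W F SH" and sub: "{g0} \<times> SH \<subseteq> C"
  shows "{g0} \<times> W \<subseteq> C"
proof -
  define D where "D = {h \<in> W. (g0, h) \<in> C}"
  have "w \<in> D" if w: "w \<in> W - D" and xs: "cycle_in F (D \<union> {w}) xs" and wx: "w \<in> set xs" for w xs
  proof -
    let ?f = "\<lambda>h. (g0, h)"
    have inj: "inj ?f" by (auto simp: inj_on_def)
    have "cycle_in (box_edges V E W F) (?f ` (D \<union> {w})) (map ?f xs)"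
      by (rule cycle_map[OF xs inj]) (simp add: box_adj g0)
    then have "cycle_in (box_edges V E W F) (C \<union> {(g0,w)}) (map ?f xs)"
      by (rule cycle_mono) (auto simp: D_def)
    then have "(g0, w) \<in> C" using interval_mem[OF C] w g0 wx by auto
    then show ?thesis using w by (simp add: D_def)
  qed
  then have "cycle_interval W F D \<subseteq> D" unfolding cycle_interval_def by blast
  then have "cycle_convex W F D" unfolding cycle_convex_def cycle_interval_def D_def by blast
  moreover have "SH \<subseteq> D" using sub SH by (auto simp: D_def cc_hull_set_def)
  ultimately have "cc_hull W F SH \<subseteq> D" by (rule hull_least)
  then show ?thesis using SH by (auto simp: cc_hull_set_def D_def)
qed

lemma four_cycle:
  assumes "g \<noteq> g'" "h \<noteq> h'" "adj E g g'" "adj F h h'" "g \<in> V" "g' \<in> V" "h \<in> W" "h' \<in> W"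
  shows "cycle_in (box_edges V E W F) {(g,h),(g,h'),(g',h'),(g',h)} [(g,h),(g,h'),(g',h'),(g',h)]"
proof -
  have "adj E g' g" "adj F h' h" using adj_sym[OF assms(3)] adj_sym[OF assms(4)] by auto
  then show ?thesis using assms by (simp add: cycle_Cons box_adj)
qed

lemma fill:
  assumes gV: "graph V E" and gW: "graph W F" and cV: "connected_graph V E" and cW: "connected_graph W F"
    and C: "cycle_convex (V \<times> W) (box_edges V E W F) C" and g0: "g0 \<in> V" and h0: "h0 \<in> W"
    and L1: "V \<times> {h0} \<subseteq> C" and L2: "{g0} \<times> W \<subseteq> C"
  shows "V \<times> W \<subseteq> C"
proof
  fix p assume "p \<in> V \<times> W"
  then obtain g h where p: "p = (g,h)" "g \<in> V" "h \<in> W" by auto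
  have "(g0, g) \<in> {(x, y). adj E x y}\<^sup>*" using cV g0 p by (simp add: connected_graph_def)
  then have "\<forall>h\<in>W. (g, h) \<in> C"
  proof (induction rule: rtrancl_induct)
    case base then show ?case using L2 by auto
  next
    case (step y z)
    have ayz: "adj E y z" using step by simp
    have yz: "y \<in> V" "z \<in> V" "y \<noteq> z" using graph_adj[OF gV ayz] by auto
    show ?case
    proof
      fix h assume h: "h \<in> W"
      have "(h0, h) \<in> {(x, y). adj F x y}\<^sup>*" using cW h0 h by (simp add: connected_graph_def)
      then show "(z, h) \<in> C"
      proof (induction rule: rtrancl_induct)
        case base then show ?case using L1 yz by auto
      next
        case (step h' h'')
        have ah: "adj F h' h''" using step by simp
        have hh: "h' \<in> W" "h'' \<in> W" "h' \<noteq> h''" using graph_adj[OF gW ah] by auto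
        have cyc: "cycle_in (box_edges V E W F) {(z,h''),(z,h'),(y,h'),(y,h'')} [(z,h''),(z,h'),(y,h'),(y,h'')]"
          using four_cycle[OF yz(3)[symmetric] hh(3)[symmetric] adj_sym[OF ayz] adj_sym[OF ah] yz(2) yz(1) hh(2) hh(1)] .
        have "{(z,h''),(z,h'),(y,h'),(y,h'')} \<subseteq> C \<union> {(z,h'')}"
          using step.IH \<open>\<forall>h\<in>W. (y, h) \<in> C\<close> hh by auto
        then have "cycle_in (box_edges V E W F) (C \<union> {(z,h'')}) [(z,h''),(z,h'),(y,h'),(y,h'')]"
          using cycle_mono[OF cyc] by blast
        then show ?case using interval_mem[OF C] yz hh by auto
      qed
    qed
  qed
  then show "p \<in> C" using p by auto
qed


lemma pair_convex:
  assumes x: "x \<in> V \<times> W" and y: "y \<in> V \<times> W" and f: "fst x \<noteq> fst y" and s: "snd x \<noteq> snd y"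
  shows "cycle_convex (V \<times> W) (box_edges V E W F) {x, y}"
proof -
  have "False" if w: "w \<notin> {x,y}" and xs: "cycle_in (box_edges V E W F) ({x,y} \<union> {w}) xs" and wx: "w \<in> set xs" for w xs
  proof -
    have xy: "x \<noteq> y" using f by auto
    have c3: "card ({x,y} \<union> {w}) = 3" using w xy by auto
    have xsd: "distinct xs" "set xs \<subseteq> {x,y} \<union> {w}" "3 \<le> length xs"
      using xs by (auto simp only: cycle_in_def)
    have "length xs = card (set xs)" using xsd(1) by (simp only: distinct_card)
    moreover have "card (set xs) \<le> 3" using c3 card_mono[OF _ xsd(2)] by simp
    ultimately have "card (set xs) = card ({x,y} \<union> {w})" using c3 xsd(3) by simp
    then have se: "set xs = {x,y} \<union> {w}" using card_subset_eq[OF _ xsd(2)] by simp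
    then have "x \<in> set xs" by simp
    then obtain ys where ys: "cycle_in (box_edges V E W F) ({x,y} \<union> {w}) (x # ys)" and sys: "set (x # ys) = set xs"
      using cycle_rotate[OF xs] by blast
    have "distinct (x # ys)" using ys by (simp add: cycle_Cons)
    then have "length (x # ys) = card (set (x # ys))" by (simp only: distinct_card)
    also have "\<dots> = 3" using sys se c3 by simp
    finally have "length ys = 2" by simp
    then obtain u v where uv: "ys = [u, v]" by (auto simp: numeral_2_eq_2 length_Suc_conv)
    have adjs: "adj (box_edges V E W F) x u" "adj (box_edges V E W F) v x"
      using ys uv by (auto simp: cycle_Cons)
    have "y \<in> {u, v}" using sys se uv xy by auto
    then have "adj (box_edges V E W F) x y" using adjs(1) adj_sym[OF adjs(2)] by auto
    then show False using f s by (cases x; cases y) (auto simp: box_adj)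
  qed
  then have "cycle_interval (V \<times> W) (box_edges V E W F) {x, y} \<subseteq> {x, y}"
    unfolding cycle_interval_def by blast
  then show ?thesis using x y unfolding cycle_convex_def cycle_interval_def by blast
qed


theorem mainTheorem7:
  fixes V :: "'a set" and E :: "'a set set" and W :: "'b set" and F :: "'b set set"
  assumes "graph V E" and "connected_graph V E" and "nontrivial V"
    and "graph W F" and "connected_graph W F" and "nontrivial W"
  shows "max (max (hn_cc V E) (hn_cc W F)) 3
           \<le> hn_cc (box_vertices V W) (box_edges V E W F)
       \<and> hn_cc (box_vertices V W) (box_edges V E W F)
           \<le> hn_cc V E + hn_cc W F - 1"
proof -
  let ?E = "box_edges V E W F"
  have bv: "box_vertices V W = V \<times> W" by (simp add: box_vertices_def)
  have finV: "finite V" "finite W" using assms(1,4) by (auto simp: graph_def)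
  have V2: "2 \<le> card V" "2 \<le> card W" using assms(3,6) by (auto simp: nontrivial_def)
  have Vne: "V \<noteq> {}" "W \<noteq> {}" using V2 by auto
  have other_g: "\<exists>g'\<in>V. g' \<noteq> g" for g
  proof (rule ccontr)
    assume "\<not> ?thesis" then have "V \<subseteq> {g}" by auto
    then have "card V \<le> 1" using card_mono[of "{g}" V] by simp
    then show False using V2 by simp
  qed
  have other_h: "\<exists>h'\<in>W. h' \<noteq> h" for h
  proof (rule ccontr)
    assume "\<not> ?thesis" then have "W \<subseteq> {h}" by auto
    then have "card W \<le> 1" using card_mono[of "{h}" W] by simp
    then show False using V2 by simp
  qed
  obtain S where S: "cc_hull_set (V \<times> W) ?E S" "card S = hn_cc (V \<times> W) ?E"
    using hn_ex by blast
  have SVW: "S \<subseteq> V \<times> W" and hullS: "cc_hull (V \<times> W) ?E S = V \<times> W"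
    using S by (auto simp: cc_hull_set_def)
  have finS: "finite S" using SVW finV finite_subset by blast
  have l1: "hn_cc V E \<le> card S"
  proof -
    have "cc_hull_set V E (fst ` S)"
      unfolding cc_hull_set_def
    proof
      show "fst ` S \<subseteq> V" using SVW by auto
      show "cc_hull V E (fst ` S) = V"
      proof
        show "cc_hull V E (fst ` S) \<subseteq> V" by (rule hull_least[OF V_convex]) (use SVW in auto)
        show "V \<subseteq> cc_hull V E (fst ` S)"
          unfolding cc_hull_def
        proof (intro subsetI InterI, clarify)
          fix g C assume g: "g \<in> V" and C: "cycle_convex V E C" "fst ` S \<subseteq> C"
          have "S \<subseteq> C \<times> W" using C(2) SVW by force
          then have "V \<times> W \<subseteq> C \<times> W" using hull_least[OF prod_convex_G[OF C(1)]] hullS by metis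
          then show "g \<in> C" using g Vne by auto
        qed
      qed
    qed
    then have "hn_cc V E \<le> card (fst ` S)" by (rule hn_le)
    also have "\<dots> \<le> card S" using finS card_image_le by blast
    finally show ?thesis .
  qed
  have l2: "hn_cc W F \<le> card S"
  proof -
    have "cc_hull_set W F (snd ` S)"
      unfolding cc_hull_set_def
    proof
      show "snd ` S \<subseteq> W" using SVW by auto
      show "cc_hull W F (snd ` S) = W"
      proof
        show "cc_hull W F (snd ` S) \<subseteq> W" by (rule hull_least[OF V_convex]) (use SVW in auto)
        show "W \<subseteq> cc_hull W F (snd ` S)"
          unfolding cc_hull_def
        proof (intro subsetI InterI, clarify)
          fix h C assume h: "h \<in> W" and C: "cycle_convex W F C" "snd ` S \<subseteq> C"
          have "S \<subseteq> V \<times> C" using C(2) SVW by force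
          then have "V \<times> W \<subseteq> V \<times> C" using hull_least[OF prod_convex_H[OF C(1)]] hullS by metis
          then show "h \<in> C" using h Vne by auto
        qed
      qed
    qed
    then have "hn_cc W F \<le> card (snd ` S)" by (rule hn_le)
    also have "\<dots> \<le> card S" using finS card_image_le by blast
    finally show ?thesis .
  qed
  have l3: "3 \<le> card S"
  proof (rule ccontr)
    assume "\<not> 3 \<le> card S"
    then have cS: "card S \<le> 2" by simp
    obtain C where C: "cycle_convex (V \<times> W) ?E C" "S \<subseteq> C" "\<not> V \<times> W \<subseteq> C"
    proof (cases "\<exists>g\<in>V. S \<subseteq> {g} \<times> W")
      case True
      then obtain g where g: "g \<in> V" "S \<subseteq> {g} \<times> W" by blast
      obtain g' where g': "g' \<in> V" "g' \<noteq> g" using other_g by blast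
      have "cycle_convex V E {g}" using g by (intro small_convex) auto
      then have "cycle_convex (V \<times> W) ?E ({g} \<times> W)" by (rule prod_convex_G)
      moreover have "\<not> V \<times> W \<subseteq> {g} \<times> W" using g' Vne by auto
      ultimately show ?thesis using that g by blast
    next
      case F1: False
      show ?thesis
      proof (cases "\<exists>h\<in>W. S \<subseteq> V \<times> {h}")
        case True
        then obtain h where h: "h \<in> W" "S \<subseteq> V \<times> {h}" by blast
        obtain h' where h': "h' \<in> W" "h' \<noteq> h" using other_h by blast
        have "cycle_convex W F {h}" using h by (intro small_convex) auto
        then have "cycle_convex (V \<times> W) ?E (V \<times> {h})" by (rule prod_convex_H)
        moreover have "\<not> V \<times> W \<subseteq> V \<times> {h}" using h' Vne by auto
        ultimately show ?thesis using that h by blast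
      next
        case F2: False
        have "S \<noteq> {}" using F1 Vne by auto
        then obtain x where x: "x \<in> S" by blast
        have "card S \<noteq> 0" using finS x by auto
        moreover have "card S \<noteq> 1"
        proof
          assume "card S = 1"
          then have "S = {x}" using x by (auto simp: card_1_singleton_iff)
          then show False using F1 x SVW by (cases x) auto
        qed
        ultimately have "card S = 2" using cS by linarith
        then obtain a b where ab: "S = {a, b}" "a \<noteq> b" by (auto simp: card_2_iff)
        have abV: "a \<in> V \<times> W" "b \<in> V \<times> W" using ab SVW by auto
        have "fst a \<noteq> fst b" using F1 ab abV by (cases a; cases b) auto
        moreover have "snd a \<noteq> snd b" using F2 ab abV by (cases a; cases b) auto
        ultimately have "cycle_convex (V \<times> W) ?E {a, b}" using pair_convex abV by blast
        moreover have "\<not> V \<times> W \<subseteq> {a, b}"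
        proof
          assume "V \<times> W \<subseteq> {a, b}"
          then have "card (V \<times> W) \<le> 2" using card_mono[of "{a,b}" "V \<times> W"] card_insert_le_m1
            by (metis card_2_iff finite.emptyI finite.insertI ab(2) order_refl)
          moreover have "card (V \<times> W) \<ge> 4" using V2 mult_le_mono[OF V2(1) V2(2)]
            by (simp add: card_cartesian_product)
          ultimately show False by simp
        qed
        ultimately show ?thesis using that ab by blast
      qed
    qed
    then have "cc_hull (V \<times> W) ?E S \<subseteq> C" using hull_least by blast
    then show False using hullS C(3) by simp
  qed
  obtain SG where SG: "cc_hull_set V E SG" "card SG = hn_cc V E" using hn_ex by blast
  obtain SH where SH: "cc_hull_set W F SH" "card SH = hn_cc W F" using hn_ex by blast
  have SGV: "SG \<subseteq> V" "SH \<subseteq> W" using SG SH by (auto simp: cc_hull_set_def)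
  have finSG: "finite SG" "finite SH" using SGV finV finite_subset by blast+
  have "SG \<noteq> {}"
  proof
    assume e: "SG = {}"
    have "cycle_convex V E {}" by (rule small_convex) auto
    then have "cc_hull V E SG \<subseteq> {}" using hull_least e by blast
    then show False using SG Vne by (auto simp: cc_hull_set_def)
  qed
  then obtain g0 where g0: "g0 \<in> SG" by blast
  have "SH \<noteq> {}"
  proof
    assume e: "SH = {}"
    have "cycle_convex W F {}" by (rule small_convex) auto
    then have "cc_hull W F SH \<subseteq> {}" using hull_least e by blast
    then show False using SH Vne by (auto simp: cc_hull_set_def)
  qed
  then obtain h0 where h0: "h0 \<in> SH" by blast
  let ?T = "SG \<times> {h0} \<union> {g0} \<times> SH"
  have TV: "?T \<subseteq> V \<times> W" using SGV g0 h0 by auto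
  have "cc_hull (V \<times> W) ?E ?T = V \<times> W"
  proof
    show "cc_hull (V \<times> W) ?E ?T \<subseteq> V \<times> W" by (rule hull_least[OF V_convex TV])
    show "V \<times> W \<subseteq> cc_hull (V \<times> W) ?E ?T"
      unfolding cc_hull_def
    proof (rule Inter_greatest)
      fix C assume "C \<in> {C. cycle_convex (V \<times> W) ?E C \<and> ?T \<subseteq> C}"
      then have C: "cycle_convex (V \<times> W) ?E C" "?T \<subseteq> C" by auto
      have "V \<times> {h0} \<subseteq> C" using layer_G[OF C(1) _ SG(1)] C(2) h0 SGV by blast
      moreover have "{g0} \<times> W \<subseteq> C" using layer_H[OF C(1) _ SH(1)] C(2) g0 SGV by blast
      ultimately show "V \<times> W \<subseteq> C"
        using fill[OF assms(1,4,2,5) C(1)] g0 h0 SGV by blast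
    qed
  qed
  then have "cc_hull_set (V \<times> W) ?E ?T" using TV by (simp add: cc_hull_set_def)
  then have u1: "hn_cc (V \<times> W) ?E \<le> card ?T" by (rule hn_le)
  have int: "SG \<times> {h0} \<inter> {g0} \<times> SH = {(g0, h0)}" using g0 h0 by auto
  have "card (SG \<times> {h0}) + card ({g0} \<times> SH) = card ?T + card (SG \<times> {h0} \<inter> {g0} \<times> SH)"
    by (rule card_Un_Int) (use finSG in auto)
  then have "card ?T = card SG + card SH - 1" using int by (simp add: card_cartesian_product)
  then show ?thesis using u1 l1 l2 l3 S SG SH bv by simp
qed

end
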